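(* Fix the number $n$ of agents, and for each $m$ let $\mathcal{K}^*_m$ be the set of vectors $k=(k_1,\ldots,k_n)$ of non-negative integers with $\sum_i k_i=m$ that maximize $SW^e_{\mathtt{FI}}(k)$ when there are $m$ items. (i) With the lexicographic scoring vector $s_j=2^{m-j}$: for every $\epsilon>0$ there exists $M$ (depending on $n$) such that for all $m\ge M$ and every $k\in\mathcal{K}^*_m$, $$\frac{\max_{a}EU^k_{\mathtt{FI}}(a)-\min_{a}EU^k_{\mathtt{FI}}(a)}{\sum_{a}EU^k_{\mathtt{FI}}(a)}<\epsilon.$$ (ii) With the Borda scoring vector $s_j=m-j+1$: for every $\epsilon>0$ there exists $M$ (depending on $n$) such that for all $m\ge M$ there exists $k\in\mathcal{K}^*_m$ satisfying the same inequality.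
   Context: There are $n$ agents $a_1,\ldots,a_n$ and $m$ items. A preference profile assigns to each agent a strict ranking of the items. With scoring vector $s=(s_1,\ldots,s_m)$ ($s_1\ge\cdots\ge s_m\ge 0$), an agent's value for her $j$-th preferred item is $s_j$, and utilities are additive. Given $k=(k_1,\ldots,k_n)$ with non-negative integer entries summing to $m$, agent $a_1$ first picks $k_1$ items, then $a_2$ picks $k_2$ of the remaining items, etc., each agent greedily picking her most preferred remaining items. $EU^k_{\mathtt{FI}}(a)$ is the expected total score received by $a$ when profiles are drawn from the full independence model $\mathtt{FI}$ (each agent's ranking uniformly random, independently across agents). $SW^e_{\mathtt{FI}}(k)=\min_a EU^k_{\mathtt{FI}}(a)$. *)

theory Defs
  imports Complex_Main "HOL-Library.FuncSet"
begin

text \<open>Agents are 0,...,n-1 (agent i is a_{i+1}); items are 0,...,m-1.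
A ranking of the m items is a list listing every item exactly once,
most preferred first.  A profile assigns a ranking to each agent.\<close>

definition rankings :: "nat \<Rightarrow> nat list set" where
  "rankings m = {xs. distinct xs \<and> set xs = {..<m}}"

definition profiles :: "nat \<Rightarrow> nat \<Rightarrow> (nat \<Rightarrow> nat list) set" where
  "profiles n m = PiE {..<n} (\<lambda>_. rankings m)"

definition picks :: "nat list \<Rightarrow> nat set \<Rightarrow> nat \<Rightarrow> nat list" where
  "picks r R c = take c (filter (\<lambda>x. x \<in> R) r)"

fun remaining :: "nat \<Rightarrow> (nat \<Rightarrow> nat list) \<Rightarrow> (nat \<Rightarrow> nat) \<Rightarrow> nat \<Rightarrow> nat set" where
  "remaining m P k 0 = {..<m}"
| "remaining m P k (Suc i) = remaining m P k i - set (picks (P i) (remaining m P k i) (k i))"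

definition agent_bundle :: "nat \<Rightarrow> (nat \<Rightarrow> nat list) \<Rightarrow> (nat \<Rightarrow> nat) \<Rightarrow> nat \<Rightarrow> nat set" where
  "agent_bundle m P k i = set (picks (P i) (remaining m P k i) (k i))"

text \<open>Utility of agent a: s is the scoring vector indexed 1..m; the agent gets s_(j+1)
for the item at (0-based) position j of her ranking.\<close>
definition utility :: "nat \<Rightarrow> (nat \<Rightarrow> real) \<Rightarrow> (nat \<Rightarrow> nat list) \<Rightarrow> (nat \<Rightarrow> nat) \<Rightarrow> nat \<Rightarrow> real" where
  "utility m s P k a = (\<Sum>j<m. if P a ! j \<in> agent_bundle m P k a then s (Suc j) else 0)"

text \<open>Expected utility under the full independence model (uniform over profiles).\<close>
definition EU :: "nat \<Rightarrow> nat \<Rightarrow> (nat \<Rightarrow> real) \<Rightarrow> (nat \<Rightarrow> nat) \<Rightarrow> nat \<Rightarrow> real" where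
  "EU n m s k a = (\<Sum>P\<in>profiles n m. utility m s P k a) / real (card (profiles n m))"

definition kvecs :: "nat \<Rightarrow> nat \<Rightarrow> (nat \<Rightarrow> nat) set" where
  "kvecs n m = {k. (\<forall>i\<ge>n. k i = 0) \<and> (\<Sum>i<n. k i) = m}"

definition SW_e :: "nat \<Rightarrow> nat \<Rightarrow> (nat \<Rightarrow> real) \<Rightarrow> (nat \<Rightarrow> nat) \<Rightarrow> real" where
  "SW_e n m s k = Min ((\<lambda>a. EU n m s k a) ` {..<n})"

definition Kstar :: "nat \<Rightarrow> nat \<Rightarrow> (nat \<Rightarrow> real) \<Rightarrow> (nat \<Rightarrow> nat) set" where
  "Kstar n m s = {k \<in> kvecs n m. \<forall>k'\<in>kvecs n m. SW_e n m s k' \<le> SW_e n m s k}"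

definition EU_ratio :: "nat \<Rightarrow> nat \<Rightarrow> (nat \<Rightarrow> real) \<Rightarrow> (nat \<Rightarrow> nat) \<Rightarrow> real" where
  "EU_ratio n m s k =
     (Max ((\<lambda>a. EU n m s k a) ` {..<n}) - Min ((\<lambda>a. EU n m s k a) ` {..<n}))
     / (\<Sum>a<n. EU n m s k a)"

definition lex_score :: "nat \<Rightarrow> nat \<Rightarrow> real" where
  "lex_score m j = 2 ^ (m - j)"

definition borda_score :: "nat \<Rightarrow> nat \<Rightarrow> real" where
  "borda_score m j = real (m - j + 1)"

end

theory Submission
  imports Defs
begin


section \<open>Weighted sums over rankings\<close>

definition wl :: "(nat \<Rightarrow> real) \<Rightarrow> nat list \<Rightarrow> nat set \<Rightarrow> real" where
  "wl s r B = (\<Sum>j<length r. if r ! j \<in> B then s (Suc j) else 0)"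

definition goods :: "(nat \<Rightarrow> real) \<Rightarrow> bool" where
  "goods s \<longleftrightarrow> (\<forall>i j. i \<le> j \<longrightarrow> s j \<le> s i) \<and> (\<forall>i. 0 \<le> s i)"

lemma goods_Suc: "goods s \<Longrightarrow> goods (\<lambda>i. s (Suc i))"
  unfolding goods_def by auto

lemma wl_Cons: "wl s (y#r) B = (if y \<in> B then s 1 else 0) + wl (\<lambda>i. s (Suc i)) r B"
  unfolding wl_def by (simp only: length_Cons sum.lessThan_Suc_shift) simp

lemma wl_Nil[simp]: "wl s [] B = 0" unfolding wl_def by simp

lemma wl_mono: "B \<subseteq> B' \<Longrightarrow> goods s \<Longrightarrow> wl s r B \<le> wl s r B'"
  unfolding wl_def goods_def by (intro sum_mono) auto

lemma wl_empty[simp]: "wl s r {} = 0" unfolding wl_def by simp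

lemma wl_nonneg: "goods s \<Longrightarrow> 0 \<le> wl s r B"
  unfolding wl_def goods_def by (intro sum_nonneg) auto

lemma wl_disj: "set r \<inter> B = {} \<Longrightarrow> wl s r B = 0"
  unfolding wl_def by (intro sum.neutral) (auto dest: nth_mem)

lemma wl_insert_notin: "z \<notin> set r \<Longrightarrow> wl s r (insert z B) = wl s r B"
  unfolding wl_def by (intro sum.cong) (auto dest: nth_mem)

lemma wl_insert: "goods s \<Longrightarrow> wl s r (insert z B) \<le> wl s r B + wl s r {z}"
  unfolding wl_def goods_def sum.distrib[symmetric] by (intro sum_mono) auto

lemma wl_single: "distinct r \<Longrightarrow> goods s \<Longrightarrow> wl s r {z} \<le> s 1"
proof (induction r arbitrary: s)
  case Nil then show ?case by (simp add: goods_def)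
next
  case (Cons y r)
  show ?case
  proof (cases "y = z")
    case True
    then have "wl (\<lambda>i. s (Suc i)) r {z} = 0" using Cons.prems by (intro wl_disj) auto
    then show ?thesis using True by (simp add: wl_Cons)
  next
    case False
    have "wl (\<lambda>i. s (Suc i)) r {z} \<le> s 2"
      using Cons.IH[of "\<lambda>i. s (Suc i)"] Cons.prems goods_Suc by (simp add: numeral_2_eq_2)
    also have "s 2 \<le> s 1" using Cons.prems(2) unfolding goods_def by auto
    finally show ?thesis using False by (simp add: wl_Cons)
  qed
qed

lemma wl_insert_bound: "distinct r \<Longrightarrow> goods s \<Longrightarrow> B \<subseteq> insert z B' \<Longrightarrow> wl s r B \<le> wl s r B' + s 1"
  using wl_mono[of B "insert z B'" s r] wl_insert[of s r z B'] wl_single[of r s z] by linarith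

lemma set_take_Suc_sub: "set (take (Suc c) xs) \<subseteq> insert (xs ! c) (set (take c xs))"
proof (cases "c < length xs")
  case True then show ?thesis by (simp add: take_Suc_conv_app_nth)
next
  case False then show ?thesis by auto
qed

lemma wl_take_Suc: "distinct r \<Longrightarrow> goods s \<Longrightarrow> wl s r (set (take (Suc c) xs)) \<le> wl s r (set (take c xs)) + s 1"
  by (rule wl_insert_bound[OF _ _ set_take_Suc_sub])

lemma wl_take_mono: "goods s \<Longrightarrow> c \<le> c' \<Longrightarrow> wl s r (set (take c xs)) \<le> wl s r (set (take c' xs))"
  by (intro wl_mono set_take_subset_set_take) auto

lemma wl_filter_mono:
  "goods s \<Longrightarrow> distinct r \<Longrightarrow> S \<subseteq> S' \<Longrightarrow>
   wl s r (set (take c (filter (\<lambda>x. x\<in>S) r))) \<le> wl s r (set (take c (filter (\<lambda>x. x\<in>S') r)))"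
proof (induction r arbitrary: s c)
  case Nil then show ?case by simp
next
  case (Cons y r)
  let ?s = "\<lambda>i. s (Suc i)"
  have gs: "goods ?s" using Cons.prems goods_Suc by auto
  have dr: "distinct r" and yr: "y \<notin> set r" using Cons.prems by auto
  show ?case
  proof (cases c)
    case 0 then show ?thesis by simp
  next
    case (Suc c')
    consider "y \<in> S" | "y \<notin> S" "y \<in> S'" | "y \<notin> S'" by blast
    then show ?thesis
    proof cases
      case 1
      then have yS': "y \<in> S'" using Cons.prems by auto
      have "wl s (y # r) (set (take c (filter (\<lambda>x. x\<in>S) (y#r))))
          = s 1 + wl ?s r (set (take c' (filter (\<lambda>x. x\<in>S) r)))"
        using 1 Suc yr by (simp add: wl_Cons wl_insert_notin)
      also have "\<dots> \<le> s 1 + wl ?s r (set (take c' (filter (\<lambda>x. x\<in>S') r)))"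
        using Cons.IH[OF gs dr Cons.prems(3)] by simp
      also have "\<dots> = wl s (y # r) (set (take c (filter (\<lambda>x. x\<in>S') (y#r))))"
        using yS' Suc yr by (simp add: wl_Cons wl_insert_notin)
      finally show ?thesis .
    next
      case 2
      have "wl s (y # r) (set (take c (filter (\<lambda>x. x\<in>S) (y#r))))
          = wl ?s r (set (take (Suc c') (filter (\<lambda>x. x\<in>S) r)))"
        using 2 Suc by (auto simp add: wl_Cons dest: in_set_takeD)
      also have "\<dots> \<le> wl ?s r (set (take c' (filter (\<lambda>x. x\<in>S) r))) + ?s 1"
        by (rule wl_take_Suc[OF dr gs])
      also have "\<dots> \<le> wl ?s r (set (take c' (filter (\<lambda>x. x\<in>S') r))) + s 1"
        using Cons.IH[OF gs dr Cons.prems(3)] Cons.prems(1) unfolding goods_def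
        by (smt (verit) le_SucI order_refl)
      also have "\<dots> = wl s (y # r) (set (take c (filter (\<lambda>x. x\<in>S') (y#r))))"
        using 2 Suc yr by (simp add: wl_Cons wl_insert_notin)
      finally show ?thesis .
    next
      case 3
      then have yS: "y \<notin> S" using Cons.prems by auto
      have "wl s (y # r) (set (take c (filter (\<lambda>x. x\<in>S) (y#r))))
          = wl ?s r (set (take c (filter (\<lambda>x. x\<in>S) r)))"
        using yS by (auto simp add: wl_Cons dest: in_set_takeD)
      also have "\<dots> \<le> wl ?s r (set (take c (filter (\<lambda>x. x\<in>S') r)))"
        using Cons.IH[OF gs dr Cons.prems(3)] by simp
      also have "\<dots> = wl s (y # r) (set (take c (filter (\<lambda>x. x\<in>S') (y#r))))"
        using 3 by (auto simp add: wl_Cons dest: in_set_takeD)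
      finally show ?thesis .
    qed
  qed
qed

lemma take_filter_insert_sub:
  assumes "\<And>y. Q y \<Longrightarrow> P y" "\<And>y. P y \<Longrightarrow> y = x \<or> Q y"
  shows "set (take c (filter P r)) \<subseteq> insert x (set (take c (filter Q r)))"
  using assms
proof (induction r arbitrary: c)
  case Nil then show ?case by simp
next
  case (Cons y r)
  show ?case
  proof (cases c)
    case 0 then show ?thesis by simp
  next
    case (Suc c')
    consider "Q y" | "P y" "\<not> Q y" | "\<not> P y" using Cons.prems by blast
    then show ?thesis
    proof cases
      case 1 then show ?thesis using Cons Suc by auto
    next
      case 2
      then have yx: "y = x" using Cons.prems by blast
      have "set (take c' (filter P r)) \<subseteq> insert x (set (take c' (filter Q r)))"
        using Cons by blast
      also have "\<dots> \<subseteq> insert x (set (take c (filter Q r)))"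
        using set_take_subset_set_take[of c' c "filter Q r"] Suc by auto
      finally show ?thesis using 2 yx Suc by auto
    next
      case 3
      then have "\<not> Q y" using Cons.prems by blast
      then show ?thesis using 3 Cons by auto
    qed
  qed
qed


definition okg :: "real \<Rightarrow> (nat \<Rightarrow> nat \<Rightarrow> real) \<Rightarrow> bool" where
  "okg D g \<longleftrightarrow> (\<forall>c M. 0 \<le> g c M) \<and> (\<forall>M. g 0 M = 0) \<and> (\<forall>c M. g c M \<le> g (Suc c) M)
     \<and> (\<forall>c M. g (Suc c) M \<le> g c M + D) \<and> (\<forall>c M. g c M \<le> g c (Suc M))
     \<and> (\<forall>c M. g (Suc c) (Suc M) \<le> g c M + D)"

fun opt :: "(nat \<Rightarrow> nat \<Rightarrow> real) list \<Rightarrow> nat \<Rightarrow> real" where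
  "opt [] M = 0"
| "opt [g] M = g M M"
| "opt (g # h # gs) M = Max ((\<lambda>c. min (g c M) (opt (h # gs) (M - c))) ` {..M})"

fun vals :: "(nat \<Rightarrow> nat \<Rightarrow> real) list \<Rightarrow> nat list \<Rightarrow> nat \<Rightarrow> real list" where
  "vals [] ks M = []"
| "vals gs [] M = []"
| "vals (g # gs) (c # cs) M = g c M # vals gs cs (M - c)"

declare opt.simps(3)[simp del]

lemma okg_mono_c: assumes "okg D g" "c \<le> c'" shows "g c M \<le> g c' M"
proof (rule lift_Suc_mono_le[of "\<lambda>c. g c M", OF _ assms(2)])
  fix n show "g n M \<le> g (Suc n) M" using assms(1) unfolding okg_def by auto
qed

lemma okg_mono_M: assumes "okg D g" "M \<le> M'" shows "g c M \<le> g c M'"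
proof (rule lift_Suc_mono_le[of "g c", OF _ assms(2)])
  fix n show "g c n \<le> g c (Suc n)" using assms(1) unfolding okg_def by auto
qed

lemma opt_Max_ge: "c \<le> M \<Longrightarrow> min (g c M) (opt (h # gs) (M - c)) \<le> opt (g # h # gs) M"
  unfolding opt.simps(3) by (rule Max_ge) auto

lemma opt_Max_in: "\<exists>c\<le>M. opt (g # h # gs) M = min (g c M) (opt (h # gs) (M - c))"
proof -
  have "Max ((\<lambda>c. min (g c M) (opt (h # gs) (M - c))) ` {..M}) \<in> (\<lambda>c. min (g c M) (opt (h # gs) (M - c))) ` {..M}"
    by (rule Max_in) auto
  then show ?thesis unfolding opt.simps by blast
qed

lemma opt_props:
  assumes "\<forall>g\<in>set gs. okg D g" "0 \<le> D"
  shows "0 \<le> opt gs M \<and> opt gs 0 = 0 \<and> opt gs M \<le> opt gs (Suc M) \<and> opt gs (Suc M) \<le> opt gs M + D"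
  using assms
proof (induction gs arbitrary: M rule: induct_list012)
  case 1 then show ?case by simp
next
  case (2 g)
  then have g: "okg D g" by simp
  have "g M M \<le> g (Suc M) (Suc M)" using okg_mono_c[OF g, of M "Suc M" M] okg_mono_M[OF g, of M "Suc M" "Suc M"]
    by auto
  moreover have "g (Suc M) (Suc M) \<le> g M M + D" using g unfolding okg_def by blast
  moreover have "0 \<le> g M M" "g 0 0 = 0" using g unfolding okg_def by blast+
  ultimately show ?case by simp
next
  case (3 g h gs)
  have g: "okg D g" using 3(3) by simp
  have hs: "\<forall>g\<in>set (h # gs). okg D g" using 3(3) by simp
  have IH: "\<And>M. 0 \<le> opt (h # gs) M \<and> opt (h # gs) 0 = 0 \<and> opt (h # gs) M \<le> opt (h # gs) (Suc M) \<and>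
        opt (h # gs) (Suc M) \<le> opt (h # gs) M + D"
    by (rule 3(2)[OF hs 3(4)])
  have IHm: "opt (h # gs) a \<le> opt (h # gs) b" if "a \<le> b" for a b
  proof (rule lift_Suc_mono_le[of "opt (h#gs)", OF _ that])
    fix n show "opt (h # gs) n \<le> opt (h # gs) (Suc n)" using IH by blast
  qed
  obtain c where c: "c \<le> M" "opt (g # h # gs) M = min (g c M) (opt (h # gs) (M - c))"
    using opt_Max_in by blast
  have nn: "0 \<le> opt (g # h # gs) M"
  proof -
    have "0 \<le> g c M" "0 \<le> opt (h # gs) (M - c)" using IH g unfolding okg_def by blast+
    then show ?thesis using c(2) by simp
  qed
  have z: "opt (g # h # gs) 0 = 0"
  proof -
    have "{..0::nat} = {0}" by auto
    moreover have "g 0 0 = 0" "opt (h # gs) 0 = 0" using IH g unfolding okg_def by blast+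
    ultimately show ?thesis unfolding opt.simps(3) by simp
  qed
  have mono: "opt (g # h # gs) M \<le> opt (g # h # gs) (Suc M)"
  proof -
    have "opt (g # h # gs) M \<le> min (g c (Suc M)) (opt (h # gs) (Suc M - c))"
      using c okg_mono_M[OF g, of M "Suc M" c] IHm[of "M - c" "Suc M - c"] by (auto simp: min_le_iff_disj)
    also have "\<dots> \<le> opt (g # h # gs) (Suc M)" using c by (intro opt_Max_ge) auto
    finally show ?thesis .
  qed
  have lip: "opt (g # h # gs) (Suc M) \<le> opt (g # h # gs) M + D"
  proof -
    obtain c' where c': "c' \<le> Suc M" "opt (g # h # gs) (Suc M) = min (g c' (Suc M)) (opt (h # gs) (Suc M - c'))"
      using opt_Max_in by blast
    show ?thesis
    proof (cases c')
      case 0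
      have "g 0 (Suc M) = 0" using g unfolding okg_def by blast
      then have "opt (g # h # gs) (Suc M) \<le> 0" using c' 0 by simp
      then show ?thesis using nn 3(4) by linarith
    next
      case (Suc d)
      have "opt (g # h # gs) (Suc M) \<le> min (g d M) (opt (h # gs) (M - d)) + D"
      proof -
        have "g (Suc d) (Suc M) \<le> g d M + D" using g unfolding okg_def by blast
        moreover have "Suc M - c' = M - d" using Suc by simp
        ultimately show ?thesis using c'(2) Suc 3(4) by (simp add: min_def)
      qed
      also have "min (g d M) (opt (h # gs) (M - d)) \<le> opt (g # h # gs) M"
        using c' Suc by (intro opt_Max_ge) auto
      finally show ?thesis by simp
    qed
  qed
  show ?case using nn z mono lip by blast
qed

lemma opt_mono:
  assumes "\<forall>g\<in>set gs. okg D g" "0 \<le> D" "a \<le> b"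
  shows "opt gs a \<le> opt gs b"
proof (rule lift_Suc_mono_le[of "opt gs", OF _ assms(3)])
  fix n show "opt gs n \<le> opt gs (Suc n)" using opt_props[OF assms(1,2)] by blast
qed

lemma opt_upper:
  assumes "\<forall>g\<in>set gs. okg D g" "gs \<noteq> []" "length ks = length gs" "sum_list ks = M"
  shows "\<exists>v\<in>set (vals gs ks M). v \<le> opt gs M"
  using assms
proof (induction gs arbitrary: M ks rule: induct_list012)
  case 1 then show ?case by simp
next
  case (2 g M)
  then obtain c where "ks = [c]" by (cases ks) auto
  then show ?case using 2 by simp
next
  case (3 g h gs M)
  then obtain c ks' where ks: "ks = c # ks'" by (cases ks) auto
  have cM: "c \<le> M" and s': "sum_list ks' = M - c" using 3 ks by auto
  have "\<exists>v\<in>set (vals (h # gs) ks' (M - c)). v \<le> opt (h # gs) (M - c)"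
    by (rule 3(2)) (use 3 ks s' in auto)
  then obtain v where v: "v \<in> set (vals (h # gs) ks' (M - c))" "v \<le> opt (h # gs) (M - c)"
    by blast
  have le: "min (g c M) (opt (h # gs) (M - c)) \<le> opt (g # h # gs) M" by (rule opt_Max_ge[OF cM])
  show ?case
  proof (cases "g c M \<le> opt (h # gs) (M - c)")
    case True
    then have "min (g c M) (opt (h # gs) (M - c)) = g c M" by simp
    then have vle: "g c M \<le> opt (g # h # gs) M" using le by linarith
    show ?thesis using ks vle by (metis list.set_intros(1) vals.simps(3))
  next
    case False
    then have "min (g c M) (opt (h # gs) (M - c)) = opt (h # gs) (M - c)" by simp
    then have vle: "v \<le> opt (g # h # gs) M" using le v(2) by linarith
    show ?thesis using ks v(1) vle by (metis list.set_intros(2) vals.simps(3))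
  qed
qed

lemma crossing:
  fixes h1 h2 :: "nat \<Rightarrow> real"
  assumes m1: "\<And>a b. a \<le> b \<Longrightarrow> h1 a \<le> h1 b"
    and a2: "\<And>a b. a \<le> b \<Longrightarrow> b \<le> M \<Longrightarrow> h2 b \<le> h2 a"
    and l1: "\<And>c. h1 (Suc c) \<le> h1 c + D"
    and l2: "\<And>c. c < M \<Longrightarrow> h2 c \<le> h2 (Suc c) + D"
    and eM: "h2 M \<le> h1 M" and e0: "h1 0 \<le> h2 0"
  shows "\<exists>c\<le>M. (\<forall>c'\<le>M. min (h1 c') (h2 c') \<le> min (h1 c) (h2 c)) \<and> h1 c \<le> h2 c + 2*D \<and> h2 c \<le> h1 c + 2*D"
proof -
  define k0 where "k0 = (LEAST c. h2 c \<le> h1 c)"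
  have k0: "h2 k0 \<le> h1 k0" unfolding k0_def by (rule LeastI[of _ M]) (rule eM)
  have k0M: "k0 \<le> M" unfolding k0_def by (rule Least_le) (rule eM)
  show ?thesis
  proof (cases k0)
    case 0
    have D: "h1 0 = h2 0" using k0 e0 0 by auto
    have "\<forall>c'\<le>M. min (h1 c') (h2 c') \<le> min (h1 0) (h2 0)"
      using a2[of 0] D by (auto simp: min_le_iff_disj)
    moreover have "0 \<le> D" using l1[of 0] m1[of 0 "Suc 0"] by linarith
    ultimately show ?thesis using D by (intro exI[of _ 0]) auto
  next
    case (Suc p)
    have p: "h1 p < h2 p" using not_less_Least[of p "\<lambda>c. h2 c \<le> h1 c"] Suc unfolding k0_def by auto
    have A: "\<forall>c'\<le>M. min (h1 c') (h2 c') \<le> max (h2 k0) (h1 p)"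
    proof (intro allI impI)
      fix c' assume c': "c' \<le> M"
      show "min (h1 c') (h2 c') \<le> max (h2 k0) (h1 p)"
      proof (cases "k0 \<le> c'")
        case True then show ?thesis using a2[of k0 c'] c' by (auto simp: min_le_iff_disj)
      next
        case False then have "c' \<le> p" using Suc by auto
        then show ?thesis using m1[of c' p] by (auto simp: min_le_iff_disj)
      qed
    qed
    have b1: "h1 k0 \<le> h2 k0 + 2*D" using l1[of p] p l2[of p] Suc k0M by auto
    have b2: "h2 p \<le> h1 p + 2*D" using l2[of p] k0 l1[of p] Suc k0M by auto
    show ?thesis
    proof (cases "h1 p \<le> h2 k0")
      case True
      then show ?thesis using A k0 b1 k0M by (intro exI[of _ k0]) (auto simp: min_def)
    next
      case False
      then show ?thesis using A p b2 k0M Suc by (intro exI[of _ p]) (auto simp: min_def)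
    qed
  qed
qed

lemma opt_attained:
  assumes "\<forall>g\<in>set gs. okg D g" "gs \<noteq> []"
  shows "\<exists>ks. length ks = length gs \<and> sum_list ks = M \<and>
           (\<forall>v\<in>set (vals gs ks M). opt gs M \<le> v \<and> v \<le> opt gs M + 2 * D * real (length gs))"
  using assms
proof (induction gs arbitrary: M rule: induct_list012)
  case 1 then show ?case by simp
next
  case (2 g M)
  have "0 \<le> D" using 2 unfolding okg_def by (smt (verit) list.set_intros(1))
  then show ?case by (intro exI[of _ "[M]"]) auto
next
  case (3 g h gs M)
  have g: "okg D g" using 3 by simp
  have hs: "\<forall>g\<in>set (h # gs). okg D g" using 3 by simp
  have D0: "0 \<le> D" using g unfolding okg_def by (smt (verit))
  define h1 where "h1 c = g c M" for c
  define h2 where "h2 c = opt (h # gs) (M - c)" for c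
  have "\<exists>c\<le>M. (\<forall>c'\<le>M. min (h1 c') (h2 c') \<le> min (h1 c) (h2 c)) \<and> h1 c \<le> h2 c + 2*D \<and> h2 c \<le> h1 c + 2*D"
  proof (rule crossing)
    show "h1 a \<le> h1 b" if "a \<le> b" for a b using okg_mono_c[OF g that] unfolding h1_def .
    show "h2 b \<le> h2 a" if "a \<le> b" "b \<le> M" for a b
      unfolding h2_def using opt_mono[OF hs D0, of "M - b" "M - a"] that by auto
    show "h1 (Suc c) \<le> h1 c + D" for c using g unfolding okg_def h1_def by auto
    show "h2 c \<le> h2 (Suc c) + D" if "c < M" for c
    proof -
      have "M - c = Suc (M - Suc c)" using that by auto
      then show ?thesis unfolding h2_def using opt_props[OF hs D0, of "M - Suc c"] by auto
    qed
    show "h2 M \<le> h1 M" unfolding h2_def h1_def using opt_props[OF hs D0, of 0] g unfolding okg_def by auto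
    show "h1 0 \<le> h2 0" unfolding h2_def h1_def using opt_props[OF hs D0, of M] g unfolding okg_def by auto
  qed
  then obtain c where c: "c \<le> M" "\<forall>c'\<le>M. min (h1 c') (h2 c') \<le> min (h1 c) (h2 c)"
    "h1 c \<le> h2 c + 2*D" "h2 c \<le> h1 c + 2*D" by blast
  have optc: "opt (g # h # gs) M = min (h1 c) (h2 c)"
  proof -
    obtain c' where c': "c' \<le> M" "opt (g # h # gs) M = min (g c' M) (opt (h # gs) (M - c'))"
      using opt_Max_in by blast
    have "opt (g # h # gs) M \<le> min (h1 c) (h2 c)" using c' c(2) unfolding h1_def h2_def by auto
    moreover have "min (h1 c) (h2 c) \<le> opt (g # h # gs) M" unfolding h1_def h2_def by (rule opt_Max_ge[OF c(1)])
    ultimately show ?thesis by linarith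
  qed
  obtain ks where ks: "length ks = length (h # gs)" "sum_list ks = M - c"
    "\<forall>v\<in>set (vals (h # gs) ks (M - c)). h2 c \<le> v \<and> v \<le> h2 c + 2 * D * real (length (h # gs))"
    using 3(2)[of "M - c"] hs c(1) unfolding h2_def by auto
  define E where "E = 2 * D * real (length (h # gs))"
  have L: "2 * D * real (length (g # h # gs)) = E + 2 * D"
    unfolding E_def by (simp add: algebra_simps)
  have E0: "0 \<le> E" using D0 unfolding E_def by simp
  have h1b: "min (h1 c) (h2 c) \<le> h1 c \<and> h1 c \<le> min (h1 c) (h2 c) + (E + 2*D)"
    using c(3) E0 D0 by (auto simp: min_def)
  have rb: "\<forall>v\<in>set (vals (h # gs) ks (M - c)). min (h1 c) (h2 c) \<le> v \<and> v \<le> min (h1 c) (h2 c) + (E + 2*D)"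
  proof -
    have k3: "\<forall>v\<in>set (vals (h # gs) ks (M - c)). h2 c \<le> v \<and> v \<le> h2 c + E"
      using ks(3) unfolding E_def .
    show ?thesis using k3 c(4) D0 by (auto simp: min_def)
  qed
  have sk: "sum_list (c # ks) = M" using ks(2) c(1) by simp
  have V: "set (vals (g # h # gs) (c # ks) M) = insert (h1 c) (set (vals (h # gs) ks (M - c)))"
    by (simp add: h1_def)
  have all: "\<forall>v\<in>set (vals (g # h # gs) (c # ks) M). opt (g # h # gs) M \<le> v \<and> v \<le> opt (g # h # gs) M + 2 * D * real (length (g # h # gs))"
  proof
    fix v assume v: "v \<in> set (vals (g # h # gs) (c # ks) M)"
    show "opt (g # h # gs) M \<le> v \<and> v \<le> opt (g # h # gs) M + 2 * D * real (length (g # h # gs))"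
    proof (cases "v = h1 c")
      case True then show ?thesis unfolding L optc using h1b by simp
    next
      case False
      then have "v \<in> set (vals (h # gs) ks (M - c))" using v unfolding V by blast
      then show ?thesis unfolding L optc using rb by simp
    qed
  qed
  have len: "length (c # ks) = length (g # h # gs)" using ks(1) by simp
  show ?case by (rule exI[of _ "c # ks"], intro conjI, fact len, fact sk, fact all)
qed


lemma rankingsD: "r \<in> rankings m \<Longrightarrow> distinct r \<and> set r = {..<m} \<and> length r = m"
  unfolding rankings_def using distinct_card by fastforce

lemma finite_rankings: "finite (rankings m)"
proof (rule finite_subset[of _ "{xs. set xs \<subseteq> {..<m} \<and> length xs = m}"])
  show "rankings m \<subseteq> {xs. set xs \<subseteq> {..<m} \<and> length xs = m}" using rankingsD by auto
qed (rule finite_lists_length_eq, simp)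

lemma finite_profiles: "finite (profiles n m)"
  unfolding profiles_def by (intro finite_PiE) (auto simp: finite_rankings)

lemma card_profiles_pos: "0 < card (profiles n m)"
proof -
  have "(\<lambda>i. if i < n then [0..<m] else undefined) \<in> profiles n m"
    unfolding profiles_def rankings_def by (auto simp: PiE_iff extensional_def)
  then show ?thesis using finite_profiles card_gt_0_iff by blast
qed

lemma profiles_rank: "P \<in> profiles n m \<Longrightarrow> a < n \<Longrightarrow> P a \<in> rankings m"
  unfolding profiles_def by (auto simp: PiE_iff)

lemma picks_props:
  assumes "r \<in> rankings m" "S \<subseteq> {..<m}"
  shows "set (picks r S c) \<subseteq> S \<and> card (set (picks r S c)) = min c (card S)"
proof -
  define xs where "xs = filter (\<lambda>x. x \<in> S) r"
  have d: "distinct xs" using rankingsD[OF assms(1)] unfolding xs_def by simp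
  have sx: "set xs = S" using rankingsD[OF assms(1)] assms(2) unfolding xs_def by auto
  have lx: "length xs = card S" using distinct_card[OF d] sx by simp
  have "card (set (take c xs)) = length (take c xs)" using d by (intro distinct_card) simp
  then have "card (set (take c xs)) = min c (card S)" using lx by simp
  moreover have "set (take c xs) \<subseteq> S" using set_take_subset[of c xs] sx by simp
  ultimately show ?thesis unfolding picks_def xs_def by simp
qed

lemma rem_props:
  assumes "P \<in> profiles n m"
  shows "i \<le> n \<Longrightarrow> (\<Sum>l<i. k l) \<le> m \<Longrightarrow>
     remaining m P k i \<subseteq> {..<m} \<and> card (remaining m P k i) = m - (\<Sum>l<i. k l)"
proof (induction i)
  case 0 then show ?case by simp
next
  case (Suc i)
  have IH: "remaining m P k i \<subseteq> {..<m} \<and> card (remaining m P k i) = m - (\<Sum>l<i. k l)"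
    using Suc by simp
  have r: "P i \<in> rankings m" using profiles_rank[OF assms] Suc by simp
  let ?R = "remaining m P k i"
  let ?p = "set (picks (P i) ?R (k i))"
  have pp: "?p \<subseteq> ?R \<and> card ?p = min (k i) (card ?R)" using picks_props[OF r] IH by blast
  have ki: "k i \<le> card ?R" using Suc.prems IH by simp
  have fin: "finite ?R" using IH finite_subset by blast
  have "card (?R - ?p) = card ?R - card ?p" using pp fin by (intro card_Diff_subset) (auto intro: finite_subset)
  then have "card (?R - ?p) = m - (\<Sum>l<Suc i. k l)" using pp ki IH by simp
  then show ?case using IH by auto
qed

lemma rem_cong: "(\<forall>l<i. P l = Q l) \<Longrightarrow> remaining m P k i = remaining m Q k i"
  by (induction i) auto

lemma perm_exists:
  assumes "S \<subseteq> {..<m}" "card S = M"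
  shows "\<exists>\<pi>. bij_betw \<pi> {..<m} {..<m} \<and> \<pi> ` S = {..<M}"
proof -
  have fS: "finite S" using assms(1) finite_subset by blast
  have Mm: "M \<le> m" using card_mono[OF _ assms(1)] assms(2) by simp
  obtain f where f: "bij_betw f S {..<M}" using finite_same_card_bij[OF fS, of "{..<M}"] assms(2) by auto
  have c1: "card ({..<m} - S) = m - M" using assms by (simp add: card_Diff_subset fS)
  have c2: "card ({..<m} - {..<M}) = m - M" using Mm by (simp add: card_Diff_subset)
  obtain h where h: "bij_betw h ({..<m} - S) ({..<m} - {..<M})"
    using finite_same_card_bij[of "{..<m} - S" "{..<m} - {..<M}"] c1 c2 by auto
  define \<pi> where "\<pi> x = (if x \<in> S then f x else h x)" for x
  have b1: "bij_betw \<pi> S {..<M}" using f by (rule bij_betw_cong[THEN iffD1, rotated]) (simp add: \<pi>_def)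
  have b2: "bij_betw \<pi> ({..<m} - S) ({..<m} - {..<M})"
    using h by (rule bij_betw_cong[THEN iffD1, rotated]) (simp add: \<pi>_def)
  have "bij_betw \<pi> (S \<union> ({..<m} - S)) ({..<M} \<union> ({..<m} - {..<M}))"
    by (rule bij_betw_combine[OF b1 b2]) auto
  moreover have "S \<union> ({..<m} - S) = {..<m}" "{..<M} \<union> ({..<m} - {..<M}) = {..<m}" using assms(1) Mm by auto
  ultimately have "bij_betw \<pi> {..<m} {..<m}" by simp
  moreover have "\<pi> ` S = {..<M}" using b1 bij_betw_imp_surj_on by blast
  ultimately show ?thesis by blast
qed

lemma map_perm_rank: "bij_betw \<pi> {..<m} {..<m} \<Longrightarrow> r \<in> rankings m \<Longrightarrow> map \<pi> r \<in> rankings m"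
  unfolding rankings_def bij_betw_def by (auto simp: distinct_map inj_on_subset)

lemma picks_map:
  assumes "inj_on \<pi> {..<m}" "set r \<subseteq> {..<m}" "S \<subseteq> {..<m}"
  shows "picks (map \<pi> r) (\<pi> ` S) c = map \<pi> (picks r S c)"
proof -
  have "filter (\<lambda>x. x \<in> \<pi> ` S) (map \<pi> r) = map \<pi> (filter (\<lambda>x. x \<in> S) r)"
    unfolding filter_map
  proof (rule arg_cong[where f = "map \<pi>"], rule filter_cong[OF refl])
    fix x assume "x \<in> set r"
    then have "x \<in> {..<m}" using assms(2) by auto
    then show "((\<lambda>x. x \<in> \<pi> ` S) \<circ> \<pi>) x = (x \<in> S)" using inj_on_image_mem_iff[OF assms(1) _ assms(3)] by simp
  qed
  then show ?thesis unfolding picks_def by (simp add: take_map)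
qed

lemma wl_map:
  assumes "inj_on \<pi> {..<m}" "set r \<subseteq> {..<m}" "B \<subseteq> {..<m}"
  shows "wl s (map \<pi> r) (\<pi> ` B) = wl s r B"
  unfolding wl_def
proof (simp, rule sum.cong[OF refl])
  fix j assume "j \<in> {..<length r}"
  then have "r ! j \<in> {..<m}" using assms(2) nth_mem by auto
  then show "(if \<pi> (r ! j) \<in> \<pi> ` B then s (Suc j) else 0) = (if r ! j \<in> B then s (Suc j) else 0)"
    using inj_on_image_mem_iff[OF assms(1) _ assms(3)] by simp
qed

lemma utility_wl: "P a \<in> rankings m \<Longrightarrow> utility m s P k a = wl s (P a) (agent_bundle m P k a)"
  unfolding utility_def wl_def using rankingsD by auto

definition gfun :: "nat \<Rightarrow> nat \<Rightarrow> (nat \<Rightarrow> real) \<Rightarrow> nat \<Rightarrow> nat \<Rightarrow> nat \<Rightarrow> real" where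
  "gfun n m s a c M = (\<Sum>P\<in>profiles n m. wl s (P a) (set (picks (P a) {..<M} c))) / real (card (profiles n m))"

lemma EU_gfun:
  assumes an: "a < n" and km: "(\<Sum>l<a. k l) \<le> m"
  shows "EU n m s k a = gfun n m s a (k a) (m - (\<Sum>l<a. k l))"
proof -
  define M where "M = m - (\<Sum>l<a. k l)"
  define pi where "pi S = (SOME \<pi>. bij_betw \<pi> {..<m} {..<m} \<and> \<pi> ` S = {..<M})" for S
  define rem where "rem P = remaining m P k a" for P
  let ?pr = "profiles n m"
  have remP: "rem P \<subseteq> {..<m} \<and> card (rem P) = M" if "P \<in> ?pr" for P
    using rem_props[OF that, of a k] an km unfolding rem_def M_def by simp
  have piP: "bij_betw (pi (rem P)) {..<m} {..<m} \<and> pi (rem P) ` rem P = {..<M}" if "P \<in> ?pr" for P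
  proof -
    have "\<exists>\<pi>. bij_betw \<pi> {..<m} {..<m} \<and> \<pi> ` rem P = {..<M}"
      by (rule perm_exists) (use remP[OF that] in auto)
    then show ?thesis unfolding pi_def
      by (rule someI_ex[where P="\<lambda>\<pi>. bij_betw \<pi> {..<m} {..<m} \<and> \<pi> ` rem P = {..<M}"])
  qed
  define Phi where "Phi P = P(a := map (pi (rem P)) (P a))" for P
  have remPhi: "rem (Phi P) = rem P" for P
    unfolding rem_def Phi_def by (rule rem_cong) auto
  have Phiin: "Phi P \<in> ?pr" if "P \<in> ?pr" for P
  proof -
    have "map (pi (rem P)) (P a) \<in> rankings m"
      using map_perm_rank piP[OF that] profiles_rank[OF that an] by blast
    then have "Phi P \<in> Pi\<^sub>E (insert a {..<n}) (\<lambda>_. rankings m)"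
      unfolding Phi_def using that unfolding profiles_def by (intro PiE_fun_upd) auto
    then show ?thesis using an unfolding profiles_def by (simp add: insert_absorb)
  qed
  have inj: "inj_on Phi ?pr"
  proof (rule inj_onI)
    fix P Q assume P: "P \<in> ?pr" and Q: "Q \<in> ?pr" and e: "Phi P = Phi Q"
    have o: "P l = Q l" if "l \<noteq> a" for l
      using fun_cong[OF e, of l] that unfolding Phi_def by simp
    have "rem P = rem Q" unfolding rem_def by (rule rem_cong) (use o in auto)
    then have "map (pi (rem P)) (P a) = map (pi (rem P)) (Q a)"
      using fun_cong[OF e, of a] unfolding Phi_def by simp
    moreover have "inj_on (pi (rem P)) (set (P a) \<union> set (Q a))"
      using piP[OF P] rankingsD[OF profiles_rank[OF P an]] rankingsD[OF profiles_rank[OF Q an]]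
      unfolding bij_betw_def by (auto intro: inj_on_subset)
    ultimately have "P a = Q a" using inj_on_map_eq_map by blast
    then show "P = Q"
    proof (intro ext)
      fix l show "P l = Q l" using o \<open>P a = Q a\<close> by (cases "l = a") auto
    qed
  qed
  have surj: "Phi ` ?pr = ?pr"
    by (rule endo_inj_surj[OF finite_profiles _ inj]) (use Phiin in auto)
  have key: "wl s ((Phi P) a) (set (picks ((Phi P) a) {..<M} (k a))) = utility m s P k a" if P: "P \<in> ?pr" for P
  proof -
    let ?\<pi> = "pi (rem P)"
    have ij: "inj_on ?\<pi> {..<m}" using piP[OF P] unfolding bij_betw_def by blast
    have sr: "set (P a) \<subseteq> {..<m}" using rankingsD[OF profiles_rank[OF P an]] by simp
    have "(Phi P) a = map ?\<pi> (P a)" unfolding Phi_def by simp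
    moreover have "{..<M} = ?\<pi> ` rem P" using piP[OF P] by simp
    ultimately have "wl s ((Phi P) a) (set (picks ((Phi P) a) {..<M} (k a)))
        = wl s (map ?\<pi> (P a)) (?\<pi> ` set (picks (P a) (rem P) (k a)))"
      using picks_map[OF ij sr, of "rem P" "k a"] remP[OF P] by simp
    also have "\<dots> = wl s (P a) (set (picks (P a) (rem P) (k a)))"
    proof (rule wl_map[OF ij sr])
      show "set (picks (P a) (rem P) (k a)) \<subseteq> {..<m}"
        using picks_props[OF profiles_rank[OF P an], of "rem P" "k a"] remP[OF P] by blast
    qed
    also have "\<dots> = utility m s P k a"
      using utility_wl[of P a m s k, OF profiles_rank[OF P an]] unfolding agent_bundle_def rem_def by simp
    finally show ?thesis .
  qed
  have "(\<Sum>P\<in>?pr. wl s (P a) (set (picks (P a) {..<M} (k a))))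
      = (\<Sum>P\<in>Phi ` ?pr. wl s (P a) (set (picks (P a) {..<M} (k a))))" using surj by simp
  also have "\<dots> = (\<Sum>P\<in>?pr. wl s ((Phi P) a) (set (picks ((Phi P) a) {..<M} (k a))))"
    by (rule sum.reindex[OF inj, unfolded comp_def])
  also have "\<dots> = (\<Sum>P\<in>?pr. utility m s P k a)" by (rule sum.cong[OF refl]) (rule key)
  finally show ?thesis unfolding EU_def gfun_def M_def by simp
qed


lemma avg_le:
  assumes "\<And>P. P \<in> profiles n m \<Longrightarrow> f P \<le> h P + C"
  shows "(\<Sum>P\<in>profiles n m. f P) / real (card (profiles n m)) \<le> (\<Sum>P\<in>profiles n m. h P) / real (card (profiles n m)) + C"
proof -
  let ?N = "real (card (profiles n m))"
  have N: "0 < ?N" using card_profiles_pos by simp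
  have "(\<Sum>P\<in>profiles n m. f P) \<le> (\<Sum>P\<in>profiles n m. h P + C)" using assms by (rule sum_mono)
  also have "\<dots> = (\<Sum>P\<in>profiles n m. h P) + ?N * C" by (simp add: sum.distrib)
  finally show ?thesis using N by (simp add: divide_simps) (simp add: algebra_simps)
qed

lemma avg_ge:
  assumes "\<And>P. P \<in> profiles n m \<Longrightarrow> C \<le> f P"
  shows "C \<le> (\<Sum>P\<in>profiles n m. f P) / real (card (profiles n m))"
proof -
  let ?N = "real (card (profiles n m))"
  have N: "0 < ?N" using card_profiles_pos by simp
  have "?N * C = (\<Sum>P\<in>profiles n m. C)" by simp
  also have "\<dots> \<le> (\<Sum>P\<in>profiles n m. f P)" using assms by (rule sum_mono)
  finally show ?thesis using N by (simp add: divide_simps mult.commute)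
qed

lemma avg_mono:
  assumes "\<And>P. P \<in> profiles n m \<Longrightarrow> f P \<le> h P"
  shows "(\<Sum>P\<in>profiles n m. f P) / real (card (profiles n m)) \<le> (\<Sum>P\<in>profiles n m. h P) / real (card (profiles n m))"
  using avg_le[of n m f h 0] assms by simp

lemma okg_gfun:
  assumes an: "a < n" and s: "goods s"
  shows "okg (2 * s 1) (gfun n m s a)"
proof -
  have s1: "0 \<le> s 1" using s unfolding goods_def by auto
  have R: "P a \<in> rankings m" if "P \<in> profiles n m" for P using profiles_rank[OF that an] .
  have D: "distinct (P a)" if "P \<in> profiles n m" for P using rankingsD[OF R[OF that]] by blast
  note gd = gfun_def picks_def
  have A1: "0 \<le> gfun n m s a c M" for c M
    unfolding gfun_def by (intro divide_nonneg_nonneg sum_nonneg wl_nonneg[OF s]) auto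
  have A2: "gfun n m s a 0 M = 0" for M unfolding gd by simp
  have A3: "gfun n m s a c M \<le> gfun n m s a (Suc c) M" for c M
    unfolding gd by (intro avg_mono wl_take_mono[OF s]) simp
  have A4: "gfun n m s a (Suc c) M \<le> gfun n m s a c M + 2 * s 1" for c M
    unfolding gd using s1 by (intro avg_le) (smt (verit) wl_take_Suc[OF D s])
  have A5: "gfun n m s a c M \<le> gfun n m s a c (Suc M)" for c M
    unfolding gd by (intro avg_mono wl_filter_mono[OF s]) (auto intro: D)
  have A6: "gfun n m s a (Suc c) (Suc M) \<le> gfun n m s a c M + 2 * s 1" for c M
    unfolding gd
  proof (intro avg_le)
    fix P assume P: "P \<in> profiles n m"
    have "set (take (Suc c) (filter (\<lambda>x. x \<in> {..<Suc M}) (P a))) \<subseteq> insert M (set (take (Suc c) (filter (\<lambda>x. x \<in> {..<M}) (P a))))"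
      by (rule take_filter_insert_sub) auto
    then have "wl s (P a) (set (take (Suc c) (filter (\<lambda>x. x \<in> {..<Suc M}) (P a))))
       \<le> wl s (P a) (set (take (Suc c) (filter (\<lambda>x. x \<in> {..<M}) (P a)))) + s 1"
      by (rule wl_insert_bound[OF D[OF P] s])
    also have "\<dots> \<le> wl s (P a) (set (take c (filter (\<lambda>x. x \<in> {..<M}) (P a)))) + s 1 + s 1"
      using wl_take_Suc[OF D[OF P] s, of c "filter (\<lambda>x. x \<in> {..<M}) (P a)"] by simp
    finally show "wl s (P a) (set (take (Suc c) (filter (\<lambda>x. x \<in> {..<Suc M}) (P a))))
       \<le> wl s (P a) (set (take c (filter (\<lambda>x. x \<in> {..<M}) (P a)))) + 2 * s 1" by simp
  qed
  show ?thesis unfolding okg_def using A1 A2 A3 A4 A5 A6 by blast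
qed

lemma vals_upt:
  "vals (map G [j..<n]) (map k [j..<n]) M = map (\<lambda>i. G i (k i) (M - sum k {j..<i})) [j..<n]"
proof (induction "n - j" arbitrary: j M)
  case 0 then show ?case by simp
next
  case (Suc d)
  then have jn: "j < n" by simp
  have IH: "vals (map G [Suc j..<n]) (map k [Suc j..<n]) (M - k j)
     = map (\<lambda>i. G i (k i) (M - k j - sum k {Suc j..<i})) [Suc j..<n]"
    using Suc(1)[of "Suc j"] Suc(2) by simp
  have "map (\<lambda>i. G i (k i) (M - k j - sum k {Suc j..<i})) [Suc j..<n]
      = map (\<lambda>i. G i (k i) (M - sum k {j..<i})) [Suc j..<n]"
  proof (rule map_cong[OF refl])
    fix i assume "i \<in> set [Suc j..<n]"
    then have "j < i" by simp
    then have "sum k {j..<i} = k j + sum k {Suc j..<i}" by (rule sum.atLeast_Suc_lessThan)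
    then show "G i (k i) (M - k j - sum k {Suc j..<i}) = G i (k i) (M - sum k {j..<i})" by simp
  qed
  then show ?case using IH jn by (simp add: upt_conv_Cons)
qed

lemma vals_EU:
  assumes "k \<in> kvecs n m"
  shows "set (vals (map (gfun n m s) [0..<n]) (map k [0..<n]) m) = (\<lambda>a. EU n m s k a) ` {..<n}"
proof -
  have "set (vals (map (gfun n m s) [0..<n]) (map k [0..<n]) m)
      = (\<lambda>i. gfun n m s i (k i) (m - sum k {0..<i})) ` {..<n}"
    unfolding vals_upt by auto
  also have "\<dots> = (\<lambda>a. EU n m s k a) ` {..<n}"
  proof (rule image_cong[OF refl])
    fix i assume i: "i \<in> {..<n}"
    have "sum k {..<i} \<le> sum k {..<n}" by (rule sum_mono2) (use i in auto)
    then have "sum k {..<i} \<le> m" using assms unfolding kvecs_def by simp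
    then show "gfun n m s i (k i) (m - sum k {0..<i}) = EU n m s k i"
      using EU_gfun[of i n k m s] i by (simp add: atLeast0LessThan)
  qed
  finally show ?thesis .
qed

lemma sum_list_map_upt: "sum_list (map k [0..<n]) = (\<Sum>i<n. k i)"
  using sum_set_upt_conv_sum_list_nat[of k 0 n] by (simp add: atLeast0LessThan)

lemma exists_good_k:
  assumes n: "1 \<le> n" and s: "goods s"
  shows "\<exists>k\<in>Kstar n m s. \<exists>L. (\<forall>k'\<in>kvecs n m. SW_e n m s k' \<le> L) \<and>
            (\<forall>a<n. L \<le> EU n m s k a \<and> EU n m s k a \<le> L + 4 * s 1 * real n)"
proof -
  define gs where "gs = map (gfun n m s) [0..<n]"
  have ne: "gs \<noteq> []" using n unfolding gs_def by simp
  have ok: "\<forall>g\<in>set gs. okg (2 * s 1) g" unfolding gs_def using okg_gfun[OF _ s] by auto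
  obtain ks where ks: "length ks = length gs" "sum_list ks = m"
    "\<forall>v\<in>set (vals gs ks m). opt gs m \<le> v \<and> v \<le> opt gs m + 2 * (2 * s 1) * real (length gs)"
    using opt_attained[OF ok ne, of m] by blast
  define k where "k i = (if i < n then ks ! i else 0)" for i
  have lg: "length gs = n" unfolding gs_def by simp
  have mk: "map k [0..<n] = ks" using ks(1) lg by (intro nth_equalityI) (auto simp: k_def)
  have kv: "k \<in> kvecs n m" unfolding kvecs_def using ks(2) sum_list_map_upt[of k n] mk by (auto simp: k_def)
  have setEU: "(\<lambda>a. EU n m s k a) ` {..<n} = set (vals gs ks m)"
    using vals_EU[OF kv, of s] mk unfolding gs_def by simp
  have bnd: "\<forall>a<n. opt gs m \<le> EU n m s k a \<and> EU n m s k a \<le> opt gs m + 4 * s 1 * real n"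
  proof (intro allI impI)
    fix a assume "a < n"
    then have "EU n m s k a \<in> set (vals gs ks m)" using setEU by blast
    then show "opt gs m \<le> EU n m s k a \<and> EU n m s k a \<le> opt gs m + 4 * s 1 * real n"
      using ks(3) lg by auto
  qed
  have up: "SW_e n m s k' \<le> opt gs m" if k': "k' \<in> kvecs n m" for k'
  proof -
    have "length (map k' [0..<n]) = length gs" "sum_list (map k' [0..<n]) = m"
      using lg k' sum_list_map_upt[of k' n] unfolding kvecs_def by auto
    then obtain v where v: "v \<in> set (vals gs (map k' [0..<n]) m)" "v \<le> opt gs m"
      using opt_upper[OF ok ne] by blast
    have "v \<in> (\<lambda>a. EU n m s k' a) ` {..<n}" using v(1) vals_EU[OF k', of s] unfolding gs_def by simp
    then have "SW_e n m s k' \<le> v" unfolding SW_e_def by (intro Min_le) auto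
    then show ?thesis using v(2) by simp
  qed
  have "0 \<in> {..<n}" using n by simp
  then have ne2: "(\<lambda>a. EU n m s k a) ` {..<n} \<noteq> {}" by blast
  have lowk: "opt gs m \<le> SW_e n m s k"
    unfolding SW_e_def using bnd ne2 by (intro Min.boundedI) auto
  have "k \<in> Kstar n m s" unfolding Kstar_def using kv up lowk by (auto intro: order_trans)
  then show ?thesis using up bnd by blast
qed

lemma ratio_le:
  fixes f :: "nat \<Rightarrow> real"
  assumes n: "1 \<le> n" and b: "\<forall>a<n. L \<le> f a \<and> f a \<le> U" and L: "0 < L"
  shows "(Max (f ` {..<n}) - Min (f ` {..<n})) / (\<Sum>a<n. f a) \<le> (U - L) / L"
proof -
  have "0 \<in> {..<n}" using n by simp
  then have ne: "f ` {..<n} \<noteq> {}" by blast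
  have Mx: "Max (f ` {..<n}) \<le> U" using b ne by (intro Max.boundedI) auto
  have Mn: "L \<le> Min (f ` {..<n})" using b ne by (intro Min.boundedI) auto
  have "f 0 \<le> (\<Sum>a<n. f a)" using n b L by (intro member_le_sum) auto
  then have S: "L \<le> (\<Sum>a<n. f a)" using b n by force
  have "Min (f ` {..<n}) \<le> Max (f ` {..<n})"
    by (meson Max_ge Min_le finite_imageI finite_lessThan imageI \<open>0 \<in> {..<n}\<close> order_trans)
  then show ?thesis using Mx Mn S L by (intro frac_le) auto
qed


lemma wl_lower:
  "distinct r \<Longrightarrow> B \<subseteq> set r \<Longrightarrow> goods s \<Longrightarrow> (\<Sum>i<card B. s (length r - i)) \<le> wl s r B"
proof (induction r arbitrary: s B)
  case Nil then show ?case by simp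
next
  case (Cons y r)
  let ?s = "\<lambda>i. s (Suc i)"
  let ?L = "length r"
  have gs: "goods ?s" using Cons.prems goods_Suc by auto
  have dr: "distinct r" and yr: "y \<notin> set r" using Cons.prems by auto
  have fB: "finite B" using Cons.prems(2) finite_subset by blast
  have cB: "card B \<le> Suc ?L" using card_mono[OF _ Cons.prems(2)] distinct_card[OF Cons.prems(1)] by simp
  show ?case
  proof (cases "y \<in> B")
    case True
    define B' where "B' = B - {y}"
    have B'r: "B' \<subseteq> set r" using Cons.prems(2) unfolding B'_def by auto
    have BB': "B = insert y B'" using True unfolding B'_def by auto
    have "0 < card B" using fB True card_gt_0_iff by blast
    then have cB': "card B = Suc (card B')" using fB True unfolding B'_def by simp
    have IH: "(\<Sum>i<card B'. ?s (?L - i)) \<le> wl ?s r B'" using Cons.IH[OF dr B'r gs] .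
    have e: "(\<Sum>i<card B'. ?s (?L - i)) = (\<Sum>i<card B'. s (Suc ?L - i))"
    proof (rule sum.cong[OF refl])
      fix i assume "i \<in> {..<card B'}"
      then have "i \<le> ?L" using cB cB' by simp
      then show "?s (?L - i) = s (Suc ?L - i)" by (simp add: Suc_diff_le)
    qed
    have l: "s (Suc ?L - card B') \<le> s 1" using Cons.prems(3) unfolding goods_def using cB cB' by auto
    have "(\<Sum>i<card B. s (length (y # r) - i)) = (\<Sum>i<card B'. s (Suc ?L - i)) + s (Suc ?L - card B')"
      using cB' by simp
    also have "\<dots> \<le> wl ?s r B' + s 1" using IH e l by linarith
    also have "\<dots> = wl s (y # r) B" using True BB' yr by (simp add: wl_Cons wl_insert_notin)
    finally show ?thesis .
  next
    case False
    then have Br: "B \<subseteq> set r" using Cons.prems(2) by auto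
    have cBL: "card B \<le> ?L" using card_mono[OF _ Br] distinct_card[OF dr] by simp
    have IH: "(\<Sum>i<card B. ?s (?L - i)) \<le> wl ?s r B" using Cons.IH[OF dr Br gs] .
    have e: "(\<Sum>i<card B. ?s (?L - i)) = (\<Sum>i<card B. s (length (y # r) - i))"
    proof (rule sum.cong[OF refl])
      fix i assume "i \<in> {..<card B}"
      then have "i \<le> ?L" using cBL by simp
      then show "?s (?L - i) = s (length (y # r) - i)" by (simp add: Suc_diff_le)
    qed
    show ?thesis using IH e False by (simp add: wl_Cons)
  qed
qed

lemma goods_borda: "goods (borda_score m)"
  unfolding goods_def borda_score_def by auto

lemma sum_sq_bound: "real c * real c / 2 \<le> (\<Sum>i<c. real i + 1)"
  by (induction c) (auto simp: algebra_simps)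

lemma gfun_borda_lower:
  assumes an: "a < n" and cM: "c \<le> M" and Mm: "M \<le> m"
  shows "real c * real c / 2 \<le> gfun n m (borda_score m) a c M"
  unfolding gfun_def
proof (rule avg_ge)
  fix P assume P: "P \<in> profiles n m"
  have R: "P a \<in> rankings m" using profiles_rank[OF P an] .
  note rk = rankingsD[OF R]
  have SM: "{..<M} \<subseteq> {..<m}" using Mm by auto
  note pp = picks_props[OF R SM, of c]
  have cardB: "card (set (picks (P a) {..<M} c)) = c" using pp cM by simp
  have Bs: "set (picks (P a) {..<M} c) \<subseteq> set (P a)" using pp rk SM by auto
  have "(\<Sum>i<c. borda_score m (m - i)) \<le> wl (borda_score m) (P a) (set (picks (P a) {..<M} c))"
    using wl_lower[OF _ Bs goods_borda] rk cardB by simp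
  moreover have "(\<Sum>i<c. borda_score m (m - i)) = (\<Sum>i<c. real i + 1)"
  proof (rule sum.cong[OF refl])
    fix i assume "i \<in> {..<c}"
    then have "i \<le> m" using cM Mm by simp
    then show "borda_score m (m - i) = real i + 1" unfolding borda_score_def by simp
  qed
  ultimately show "real c * real c / 2 \<le> wl (borda_score m) (P a) (set (picks (P a) {..<M} c))"
    using sum_sq_bound[of c] by linarith
qed

definition k0 :: "nat \<Rightarrow> nat \<Rightarrow> nat \<Rightarrow> nat \<Rightarrow> nat" where
  "k0 n m t i = (if i < n - 1 then t else if i = n - 1 then m - (n - 1) * t else 0)"

lemma k0_props:
  assumes n: "1 \<le> n" and t: "n * t \<le> m"
  shows "k0 n m t \<in> kvecs n m"
    and "\<And>i. i < n \<Longrightarrow> t \<le> k0 n m t i \<and> (\<Sum>l<i. k0 n m t l) = i * t \<and> k0 n m t i \<le> m - i * t \<and> i * t + t \<le> m"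
proof -
  have s1: "(\<Sum>l<i. k0 n m t l) = i * t" if "i \<le> n - 1" for i
  proof -
    have "(\<Sum>l<i. k0 n m t l) = (\<Sum>l<i. t)" by (rule sum.cong) (use that in \<open>auto simp: k0_def\<close>)
    then show ?thesis by simp
  qed
  have nt: "(n - 1) * t + t \<le> m" using t n by (metis Suc_diff_1 add.commute le_add_diff_inverse less_le_trans mult_Suc zero_less_one)
  have "(\<Sum>l<n. k0 n m t l) = (\<Sum>l<Suc (n - 1). k0 n m t l)" using n by simp
  also have "\<dots> = (n - 1) * t + (m - (n - 1) * t)" using s1[of "n - 1"] by (simp add: k0_def)
  also have "\<dots> = m" using nt by simp
  finally show "k0 n m t \<in> kvecs n m" unfolding kvecs_def using n by (auto simp: k0_def)
  fix i assume i: "i < n"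
  have itm: "i * t + t \<le> m"
  proof -
    have "i \<le> n - 1" using i by simp
    then have "i * t \<le> (n - 1) * t" by (rule mult_right_mono) simp
    then show ?thesis using nt by linarith
  qed
  have A: "t \<le> k0 n m t i \<and> k0 n m t i \<le> m - i * t"
  proof (cases "i < n - 1")
    case True then show ?thesis using itm by (simp add: k0_def)
  next
    case False then have "i = n - 1" using i by simp
    then show ?thesis using nt by (simp add: k0_def)
  qed
  have B: "(\<Sum>l<i. k0 n m t l) = i * t" using i by (intro s1) simp
  show "t \<le> k0 n m t i \<and> (\<Sum>l<i. k0 n m t l) = i * t \<and> k0 n m t i \<le> m - i * t \<and> i * t + t \<le> m"
    using A B itm by blast
qed

lemma borda_part:
  assumes n: "1 \<le> n" and e: "0 < \<epsilon>"
  shows "\<exists>M. \<forall>m\<ge>M. \<exists>k\<in>Kstar n m (borda_score m). EU_ratio n m (borda_score m) k < \<epsilon>"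
proof -
  define M0 where "M0 = max (2 * n) (nat \<lceil>64 * real n ^ 3 / \<epsilon>\<rceil> + 1)"
  show ?thesis
  proof (intro exI allI impI)
    fix m assume mM: "M0 \<le> m"
    let ?s = "borda_score m"
    obtain k L where k: "k \<in> Kstar n m ?s" and L: "\<forall>k'\<in>kvecs n m. SW_e n m ?s k' \<le> L"
      and b: "\<forall>a<n. L \<le> EU n m ?s k a \<and> EU n m ?s k a \<le> L + 4 * ?s 1 * real n"
      using exists_good_k[OF n goods_borda] by blast
    define t where "t = m div n"
    have m2n: "2 * n \<le> m" using mM unfolding M0_def by simp
    have s1: "?s 1 = real m" using m2n n unfolding borda_score_def by simp
    have tn: "n * t \<le> m" unfolding t_def by (simp add: mult.commute)
    have rt: "real m / (2 * real n) \<le> real t"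
    proof -
      have "m = n * t + m mod n" unfolding t_def by simp
      moreover have "m mod n < n" using n by simp
      ultimately have "m \<le> n * t + n" by linarith
      then have "real m \<le> real (n * t + n)" by (simp only: of_nat_le_iff)
      then have "real m \<le> real n * real t + real n" by simp
      moreover have "real (2 * n) \<le> real m" using m2n by (simp only: of_nat_le_iff)
      ultimately have "real m \<le> 2 * (real n * real t)" by simp
      then show ?thesis using n by (simp add: divide_simps algebra_simps)
    qed
    have npos: "0 < real n" using n by simp
    have mpos: "0 < real m" using m2n n by simp
    have tpos: "0 < real t" using rt npos mpos by (smt (verit) divide_pos_pos)
    \<comment> \<open>lower bound on L via equal split\<close>
    have LB: "real t * real t / 2 \<le> L"
    proof -
      have kv: "k0 n m t \<in> kvecs n m" by (rule k0_props(1)[OF n tn])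
      have "real t * real t / 2 \<le> EU n m ?s (k0 n m t) a" if a: "a < n" for a
      proof -
        note kp = k0_props(2)[OF n tn a]
        have "real t * real t / 2 \<le> real (k0 n m t a) * real (k0 n m t a) / 2"
          using kp by (simp add: mult_mono)
        also have "\<dots> \<le> gfun n m ?s a (k0 n m t a) (m - (\<Sum>l<a. k0 n m t l))"
          using kp by (intro gfun_borda_lower[OF a]) auto
        also have "\<dots> = EU n m ?s (k0 n m t) a"
          using EU_gfun[OF a, of "k0 n m t" m ?s] kp by simp
        finally show ?thesis .
      qed
      moreover have "0 \<in> {..<n}" using n by simp
      then have "(\<lambda>a. EU n m ?s (k0 n m t) a) ` {..<n} \<noteq> {}" by blast
      ultimately have "real t * real t / 2 \<le> SW_e n m ?s (k0 n m t)"
        unfolding SW_e_def by (intro Min.boundedI) auto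
      then show ?thesis using L kv by (meson order_trans)
    qed
    have Lpos: "0 < L" using LB tpos by (smt (verit) divide_pos_pos mult_pos_pos)
    have "EU_ratio n m ?s k \<le> (L + 4 * ?s 1 * real n - L) / L"
      unfolding EU_ratio_def by (rule ratio_le[OF n _ Lpos]) (use b in auto)
    also have "\<dots> = 4 * real m * real n / L" using s1 by simp
    also have "\<dots> \<le> 4 * real m * real n / (real t * real t / 2)"
      using LB npos mpos tpos Lpos by (intro divide_left_mono) auto
    also have "\<dots> \<le> 4 * real m * real n / ((real m / (2 * real n)) * (real m / (2 * real n)) / 2)"
      using rt npos mpos tpos by (intro divide_left_mono mult_mono divide_right_mono) auto
    also have "\<dots> = 32 * real n ^ 3 / real m" using npos mpos by (simp add: field_simps power3_eq_cube)
    also have "\<dots> < \<epsilon>"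
    proof -
      have "64 * real n ^ 3 / \<epsilon> < real m"
        using mM unfolding M0_def by linarith
      then have "64 * real n ^ 3 < \<epsilon> * real m" using e by (simp add: divide_simps mult.commute)
      moreover have "0 \<le> real n ^ 3" by simp
      ultimately have "32 * real n ^ 3 < \<epsilon> * real m" by linarith
      then show ?thesis using mpos by (simp add: divide_simps)
    qed
    finally show "\<exists>k\<in>Kstar n m ?s. EU_ratio n m ?s k < \<epsilon>" using k by blast
  qed
qed


lemma goods_lex: "goods (lex_score m)"
  unfolding goods_def lex_score_def by (auto intro: power_increasing)

lemma geo: "t \<le> m \<Longrightarrow> (\<Sum>j<t. (2::real) ^ (m - Suc j)) = 2 ^ m - 2 ^ (m - t)"
proof (induction t)
  case 0 then show ?case by simp
next
  case (Suc t)
  have e: "m - t = Suc (m - Suc t)" using Suc.prems by simp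
  have "(\<Sum>j<Suc t. (2::real) ^ (m - Suc j)) = 2 ^ m - 2 ^ (m - t) + 2 ^ (m - Suc t)"
    using Suc by simp
  also have "\<dots> = 2 ^ m - 2 ^ (m - Suc t)" unfolding e by simp
  finally show ?case .
qed

lemma EU_upper:
  assumes an: "a < n" and s: "goods s"
  shows "EU n m s k a \<le> (\<Sum>j<m. s (Suc j))"
proof -
  have "EU n m s k a \<le> (\<Sum>P\<in>profiles n m. (\<Sum>j<m. s (Suc j))) / real (card (profiles n m))"
    unfolding EU_def utility_def
    by (intro avg_mono sum_mono) (use s in \<open>auto simp: goods_def\<close>)
  also have "\<dots> = (\<Sum>j<m. s (Suc j))" using card_profiles_pos[of n m] by simp
  finally show ?thesis .
qed

definition sw :: "nat \<Rightarrow> nat \<Rightarrow> nat \<Rightarrow> nat" where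
  "sw x y z = (if z = x then y else if z = y then x else z)"

lemma sw_sw: "sw x y (sw x y z) = z" unfolding sw_def by auto

lemma sw_bij: "x < m \<Longrightarrow> y < m \<Longrightarrow> bij_betw (sw x y) {..<m} {..<m}"
  by (rule bij_betw_byWitness[where f'="sw x y"]) (auto simp: sw_sw, auto simp: sw_def)

lemma count_eq:
  assumes an: "a < n" and j: "j < m" and x: "x < m" and y: "y < m"
  shows "card {P\<in>profiles n m. P a ! j = x} = card {P\<in>profiles n m. P a ! j = y}"
proof -
  define Psi where "Psi P = P(a := map (sw x y) (P a))" for P
  have inpr: "Psi P \<in> profiles n m" if P: "P \<in> profiles n m" for P
  proof -
    have "map (sw x y) (P a) \<in> rankings m"
      using map_perm_rank[OF sw_bij[OF x y] profiles_rank[OF P an]] .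
    then have "Psi P \<in> Pi\<^sub>E (insert a {..<n}) (\<lambda>_. rankings m)"
      unfolding Psi_def using P unfolding profiles_def by (intro PiE_fun_upd) auto
    then show ?thesis using an unfolding profiles_def by (simp add: insert_absorb)
  qed
  have nth: "Psi P a ! j = sw x y (P a ! j)" if P: "P \<in> profiles n m" for P
    using rankingsD[OF profiles_rank[OF P an]] j unfolding Psi_def by simp
  have inv: "Psi (Psi P) = P" for P
    unfolding Psi_def by (rule ext) (simp add: comp_def sw_sw)
  have "bij_betw Psi {P\<in>profiles n m. P a ! j = x} {P\<in>profiles n m. P a ! j = y}"
  proof (rule bij_betw_byWitness[where f'=Psi])
    show "Psi ` {P \<in> profiles n m. P a ! j = x} \<subseteq> {P \<in> profiles n m. P a ! j = y}"
      using inpr nth by (auto simp: sw_def)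
    show "Psi ` {P \<in> profiles n m. P a ! j = y} \<subseteq> {P \<in> profiles n m. P a ! j = x}"
      using inpr nth by (auto simp: sw_def)
  qed (auto simp: inv)
  then show ?thesis by (rule bij_betw_same_card)
qed

lemma count_val:
  assumes an: "a < n" and j: "j < m" and x: "x < m"
  shows "real (card {P\<in>profiles n m. P a ! j = x}) = real (card (profiles n m)) / real m"
proof -
  let ?A = "\<lambda>y. {P\<in>profiles n m. P a ! j = y}"
  have U: "profiles n m = (\<Union>y\<in>{..<m}. ?A y)"
  proof
    show "profiles n m \<subseteq> (\<Union>y\<in>{..<m}. ?A y)"
    proof
      fix P assume P: "P \<in> profiles n m"
      have "P a ! j < m" using rankingsD[OF profiles_rank[OF P an]] j nth_mem[of j "P a"] by auto
      then show "P \<in> (\<Union>y\<in>{..<m}. ?A y)" using P by auto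
    qed
  qed auto
  have fA: "finite (?A y)" for y by (rule finite_subset[OF _ finite_profiles[of n m]]) blast
  have "card (\<Union>y\<in>{..<m}. ?A y) = (\<Sum>y<m. card (?A y))"
    by (rule card_UN_disjoint) (use fA in auto)
  then have "card (profiles n m) = (\<Sum>y<m. card (?A y))" using U[symmetric] by simp
  also have "\<dots> = (\<Sum>y<m. card (?A x))"
  proof (rule sum.cong[OF refl])
    fix y assume "y \<in> {..<m}"
    then show "card (?A y) = card (?A x)" using count_eq[OF an j, of y x] x by simp
  qed
  finally have "card (profiles n m) = m * card (?A x)" by simp
  moreover have "0 < m" using j by simp
  ultimately show ?thesis by (simp add: field_simps)
qed

lemma count_ge:
  assumes an: "a < n" and j: "j < m" and Mm: "M \<le> m"
  shows "real (card {P\<in>profiles n m. M \<le> P a ! j}) = real (m - M) * real (card (profiles n m)) / real m"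
proof -
  let ?A = "\<lambda>y. {P\<in>profiles n m. P a ! j = y}"
  have U: "{P\<in>profiles n m. M \<le> P a ! j} = (\<Union>y\<in>{M..<m}. ?A y)"
  proof
    show "{P\<in>profiles n m. M \<le> P a ! j} \<subseteq> (\<Union>y\<in>{M..<m}. ?A y)"
    proof
      fix P assume P: "P \<in> {P\<in>profiles n m. M \<le> P a ! j}"
      then have P': "P \<in> profiles n m" by simp
      have "P a ! j < m" using rankingsD[OF profiles_rank[OF P' an]] j nth_mem[of j "P a"] by auto
      then show "P \<in> (\<Union>y\<in>{M..<m}. ?A y)" using P by auto
    qed
  qed auto
  have fA: "finite (?A y)" for y by (rule finite_subset[OF _ finite_profiles[of n m]]) blast
  have "card (\<Union>y\<in>{M..<m}. ?A y) = (\<Sum>y\<in>{M..<m}. card (?A y))"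
    by (rule card_UN_disjoint) (use fA in auto)
  then have "card {P\<in>profiles n m. M \<le> P a ! j} = (\<Sum>y\<in>{M..<m}. card (?A y))" using U[symmetric] by simp
  then have "real (card {P\<in>profiles n m. M \<le> P a ! j}) = (\<Sum>y\<in>{M..<m}. real (card (?A y)))" by simp
  also have "\<dots> = (\<Sum>y\<in>{M..<m}. real (card (profiles n m)) / real m)"
  proof (rule sum.cong[OF refl])
    fix y assume "y \<in> {M..<m}"
    then show "real (card (?A y)) = real (card (profiles n m)) / real m" using count_val[OF an j, of y] by simp
  qed
  finally show ?thesis by simp
qed

lemma take_filter_all:
  assumes "\<forall>x\<in>set (take t r). Q x" "t \<le> length r"
  shows "take t (filter Q r) = take t r"
proof -
  have "filter Q r = take t r @ filter Q (drop t r)"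
    using assms(1) by (subst append_take_drop_id[symmetric, of r t], subst filter_append) simp
  then show ?thesis using assms(2) by simp
qed

lemma gfun_lex_lower:
  assumes an: "a < n" and tc: "t \<le> c" and tm: "t \<le> m" and Mm: "M \<le> m"
  shows "(2 ^ m - 2 ^ (m - t)) * (1 - real t * real (m - M) / real m) \<le> gfun n m (lex_score m) a c M"
proof -
  let ?s = "lex_score m"
  let ?pr = "profiles n m"
  let ?N = "real (card ?pr)"
  define G :: real where "G = 2 ^ m - 2 ^ (m - t)"
  have G0: "0 \<le> G" unfolding G_def by (simp add: power_increasing)
  have N0: "0 < ?N" using card_profiles_pos by simp
  define good where "good P = (\<forall>j<t. P a ! j < M)" for P
  define w where "w P = wl ?s (P a) (set (picks (P a) {..<M} c))" for P
  have w0: "0 \<le> w P" for P unfolding w_def by (rule wl_nonneg[OF goods_lex])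
  have wg: "G \<le> w P" if P: "P \<in> ?pr" and g: "good P" for P
  proof -
    let ?r = "P a"
    note rk = rankingsD[OF profiles_rank[OF P an]]
    have all: "\<forall>x\<in>set (take t ?r). x \<in> {..<M}"
    proof
      fix x assume "x \<in> set (take t ?r)"
      then obtain j where "j < length (take t ?r)" "take t ?r ! j = x" by (auto simp: in_set_conv_nth)
      then show "x \<in> {..<M}" using g unfolding good_def by auto
    qed
    have "take t (filter (\<lambda>x. x \<in> {..<M}) ?r) = take t ?r"
      by (rule take_filter_all[OF all]) (use rk tm in simp)
    then have sub: "set (take t ?r) \<subseteq> set (picks ?r {..<M} c)"
      unfolding picks_def using set_take_subset_set_take[OF tc, of "filter (\<lambda>x. x \<in> {..<M}) ?r"] by simp
    have "wl ?s ?r (set (take t ?r)) \<le> w P" unfolding w_def by (rule wl_mono[OF sub goods_lex])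
    moreover have "(\<Sum>j<t. ?s (Suc j)) \<le> wl ?s ?r (set (take t ?r))"
    proof -
      have "(\<Sum>j<t. ?s (Suc j)) = (\<Sum>j<t. if ?r ! j \<in> set (take t ?r) then ?s (Suc j) else 0)"
      proof (rule sum.cong[OF refl])
        fix j assume j: "j \<in> {..<t}"
        then have "take t ?r ! j = ?r ! j" "j < length (take t ?r)" using rk tm by auto
        then have "?r ! j \<in> set (take t ?r)" by (metis nth_mem)
        then show "?s (Suc j) = (if ?r ! j \<in> set (take t ?r) then ?s (Suc j) else 0)" by simp
      qed
      also have "\<dots> \<le> (\<Sum>j<length ?r. if ?r ! j \<in> set (take t ?r) then ?s (Suc j) else 0)"
        by (rule sum_mono2) (use rk tm in \<open>auto simp: lex_score_def\<close>)
      finally show ?thesis unfolding wl_def .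
    qed
    moreover have "(\<Sum>j<t. ?s (Suc j)) = G" unfolding lex_score_def G_def using geo[OF tm] by simp
    ultimately show ?thesis by linarith
  qed
  have bad: "?pr \<subseteq> {P\<in>?pr. good P} \<union> (\<Union>j\<in>{..<t}. {P\<in>?pr. M \<le> P a ! j})"
    unfolding good_def by (auto simp: not_less)
  have fin: "finite ?pr" by (rule finite_profiles)
  have "card ?pr \<le> card ({P\<in>?pr. good P} \<union> (\<Union>j\<in>{..<t}. {P\<in>?pr. M \<le> P a ! j}))"
    by (rule card_mono[OF _ bad]) (use fin in auto)
  also have "\<dots> \<le> card {P\<in>?pr. good P} + card (\<Union>j\<in>{..<t}. {P\<in>?pr. M \<le> P a ! j})"
    by (rule card_Un_le)
  also have "\<dots> \<le> card {P\<in>?pr. good P} + (\<Sum>j<t. card {P\<in>?pr. M \<le> P a ! j})"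
    using card_UN_le[of "{..<t}" "\<lambda>j. {P\<in>?pr. M \<le> P a ! j}"] by simp
  finally have "real (card ?pr) \<le> real (card {P\<in>?pr. good P} + (\<Sum>j<t. card {P\<in>?pr. M \<le> P a ! j}))"
    by (simp only: of_nat_le_iff)
  then have c1: "?N \<le> real (card {P\<in>?pr. good P}) + (\<Sum>j<t. real (card {P\<in>?pr. M \<le> P a ! j}))"
    by simp
  have "(\<Sum>j<t. real (card {P\<in>?pr. M \<le> P a ! j})) = real t * (real (m - M) * ?N / real m)"
    using count_ge[OF an _ Mm] tm by simp
  moreover have "?N * (1 - real t * real (m - M) / real m) = ?N - real t * (real (m - M) * ?N / real m)"
    by (simp add: right_diff_distrib)
  ultimately have cg: "?N * (1 - real t * real (m - M) / real m) \<le> real (card {P\<in>?pr. good P})"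
    using c1 by linarith
  have e1: "(\<Sum>P\<in>?pr. if good P then G else 0) = G * real (card {P\<in>?pr. good P})"
  proof -
    have "?pr \<inter> Collect good = {P\<in>?pr. good P}" by auto
    then show ?thesis using fin by (simp add: sum.If_cases)
  qed
  have "G * (?N * (1 - real t * real (m - M) / real m)) \<le> G * real (card {P\<in>?pr. good P})"
    using cg G0 by (rule mult_left_mono)
  moreover have "(\<Sum>P\<in>?pr. if good P then G else 0) \<le> (\<Sum>P\<in>?pr. w P)"
    by (rule sum_mono) (use wg w0 in auto)
  ultimately have "G * (?N * (1 - real t * real (m - M) / real m)) \<le> (\<Sum>P\<in>?pr. w P)"
    using e1 by linarith
  then have "G * (1 - real t * real (m - M) / real m) \<le> (\<Sum>P\<in>?pr. w P) / ?N"
    using N0 by (simp add: divide_simps algebra_simps)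
  then show ?thesis unfolding gfun_def w_def G_def .
qed


lemma lex_part:
  assumes n: "1 \<le> n" and e: "0 < \<epsilon>"
  shows "\<exists>M. \<forall>m\<ge>M. \<forall>k\<in>Kstar n m (lex_score m). EU_ratio n m (lex_score m) k < \<epsilon>"
proof -
  define \<delta> :: real where "\<delta> = min (1/4) (\<epsilon>/8)"
  have d0: "0 < \<delta>" and d1: "\<delta> \<le> 1/4" and d2: "\<delta> \<le> \<epsilon>/8" using e unfolding \<delta>_def by auto
  define t where "t = nat \<lceil>1/\<delta>\<rceil>"
  have t1: "1/\<delta> \<le> real t" unfolding t_def by linarith
  have t2: "real t \<le> 2 ^ t"
  proof -
    have "t < 2 ^ t" by (rule less_exp)
    then have "real t < real (2 ^ t)" by (simp only: of_nat_less_iff)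
    then show ?thesis by simp
  qed
  have pt: "1/\<delta> \<le> 2 ^ t" using t1 t2 by linarith
  define M0 where "M0 = n * t + nat \<lceil>real n * real t * real t / \<delta>\<rceil> + 1"
  show ?thesis
  proof (intro exI allI impI ballI)
    fix m k assume mM: "M0 \<le> m" and k: "k \<in> Kstar n m (lex_score m)"
    let ?s = "lex_score m"
    define X :: real where "X = 2 ^ m"
    have X0: "0 < X" unfolding X_def by simp
    have ntm: "n * t \<le> m" using mM unfolding M0_def by simp
    have tm: "t \<le> m" using ntm n by (metis le_trans mult_le_mono1 mult_1)
    have mpos: "0 < real m" using mM unfolding M0_def by simp
    have mbig: "real n * real t * real t / \<delta> < real m" using mM unfolding M0_def by linarith
    have small: "real n * real t * real t / real m \<le> \<delta>"
    proof -
      have "real n * real t * real t < \<delta> * real m" using mbig d0 by (simp add: divide_simps mult.commute)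
      then show ?thesis using mpos by (simp add: divide_simps mult.commute)
    qed
    have Gb: "X * (1 - \<delta>) \<le> X - 2 ^ (m - t)"
    proof -
      have "(2::real) ^ (m - t) * 2 ^ t = X" unfolding X_def using tm by (simp add: power_add[symmetric])
      moreover have "1 \<le> \<delta> * 2 ^ t" using pt d0 by (simp add: divide_simps mult.commute)
      ultimately have "(2::real) ^ (m - t) \<le> X * \<delta>"
      proof -
        assume eq: "(2::real) ^ (m - t) * 2 ^ t = X" and one: "1 \<le> \<delta> * 2 ^ t"
        have "(2::real) ^ (m - t) * 1 \<le> 2 ^ (m - t) * (\<delta> * 2 ^ t)"
          using one by (intro mult_left_mono) auto
        also have "\<dots> = X * \<delta>" using eq by (simp add: algebra_simps)
        finally show ?thesis by simp
      qed
      then show ?thesis by (simp add: algebra_simps)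
    qed
    define Lb where "Lb = X * (1 - \<delta>) * (1 - \<delta>)"
    have Lb0: "0 < Lb" unfolding Lb_def using X0 d1 by simp
    have k0low: "Lb \<le> EU n m ?s (k0 n m t) a" if a: "a < n" for a
    proof -
      note kp = k0_props(2)[OF n ntm a]
      have sa: "(\<Sum>l<a. k0 n m t l) \<le> m" using kp by simp
      have "m - (m - a * t) = a * t" using kp by simp
      then have g: "(2 ^ m - 2 ^ (m - t)) * (1 - real t * real (a * t) / real m)
            \<le> gfun n m ?s a (k0 n m t a) (m - a * t)"
        using gfun_lex_lower[OF a _ tm, of "k0 n m t a" "m - a * t"] kp by simp
      have f2: "1 - \<delta> \<le> 1 - real t * real (a * t) / real m"
      proof -
        have "real t * real (a * t) \<le> real n * real t * real t"
          using a by (simp add: mult_right_mono mult.commute mult.left_commute)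
        then have "real t * real (a * t) / real m \<le> real n * real t * real t / real m"
          using mpos by (simp add: divide_right_mono)
        then show ?thesis using small by linarith
      qed
      have "0 \<le> X * (1 - \<delta>)" using X0 d1 by simp
      then have G0: "0 \<le> X - 2 ^ (m - t)" using Gb by linarith
      have "Lb \<le> (X - 2 ^ (m - t)) * (1 - real t * real (a * t) / real m)"
        unfolding Lb_def using Gb f2 G0 d1 by (intro mult_mono) auto
      also have "\<dots> \<le> gfun n m ?s a (k0 n m t a) (m - a * t)" using g unfolding X_def by simp
      also have "\<dots> = EU n m ?s (k0 n m t) a" using EU_gfun[OF a sa, of ?s] kp by simp
      finally show ?thesis .
    qed
    have "0 \<in> {..<n}" using n by simp
    then have ne: "(\<lambda>a. EU n m ?s (k0 n m t) a) ` {..<n} \<noteq> {}" by blast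
    have "Lb \<le> SW_e n m ?s (k0 n m t)" unfolding SW_e_def using k0low ne by (intro Min.boundedI) auto
    also have "\<dots> \<le> SW_e n m ?s k" using k k0_props(1)[OF n ntm] unfolding Kstar_def by blast
    finally have Lk: "Lb \<le> SW_e n m ?s k" .
    have bounds: "\<forall>a<n. Lb \<le> EU n m ?s k a \<and> EU n m ?s k a \<le> X"
    proof (intro allI impI conjI)
      fix a assume a: "a < n"
      have "SW_e n m ?s k \<le> EU n m ?s k a" unfolding SW_e_def using a by (intro Min_le) auto
      then show "Lb \<le> EU n m ?s k a" using Lk by simp
      have "EU n m ?s k a \<le> (\<Sum>j<m. ?s (Suc j))" by (rule EU_upper[OF a goods_lex])
      also have "\<dots> = X - 1" unfolding lex_score_def X_def using geo[of m m] by simp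
      finally show "EU n m ?s k a \<le> X" by simp
    qed
    have "EU_ratio n m ?s k \<le> (X - Lb) / Lb"
      unfolding EU_ratio_def by (rule ratio_le[OF n bounds Lb0])
    also have "\<dots> = (1 - (1 - \<delta>) * (1 - \<delta>)) / ((1 - \<delta>) * (1 - \<delta>))"
    proof -
      have "X - Lb = X * (1 - (1 - \<delta>) * (1 - \<delta>))" "Lb = X * ((1 - \<delta>) * (1 - \<delta>))"
        unfolding Lb_def by (simp_all add: algebra_simps)
      then show ?thesis using X0 by (simp only: mult_divide_mult_cancel_left_if) simp
    qed
    also have "\<dots> \<le> (2 * \<delta>) / (1/2)"
    proof (rule frac_le)
      show "0 \<le> 2 * \<delta>" using d0 by simp
      show "1 - (1 - \<delta>) * (1 - \<delta>) \<le> 2 * \<delta>" using d0 by (simp add: algebra_simps)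
      show "(0::real) < 1/2" by simp
      have "1/2 \<le> 1 - 2 * \<delta>" using d1 by simp
      also have "\<dots> \<le> (1 - \<delta>) * (1 - \<delta>)" by (simp add: algebra_simps)
      finally show "1/2 \<le> (1 - \<delta>) * (1 - \<delta>)" .
    qed
    also have "\<dots> < \<epsilon>" using d2 e by simp
    finally show "EU_ratio n m ?s k < \<epsilon>" .
  qed
qed

theorem proposition2:
  fixes n :: nat
  assumes "n \<ge> 1"
  shows "(\<forall>\<epsilon>>0. \<exists>M. \<forall>m\<ge>M. \<forall>k\<in>Kstar n m (lex_score m). EU_ratio n m (lex_score m) k < \<epsilon>)
       \<and> (\<forall>\<epsilon>>0. \<exists>M. \<forall>m\<ge>M. \<exists>k\<in>Kstar n m (borda_score m). EU_ratio n m (borda_score m) k < \<epsilon>)"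
  using lex_part[OF assms] borda_part[OF assms] by blast


end
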